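(* Let $G$ be a graph and $D\subseteq V(G)$ such that $V(G)\setminus D$ is a finite set of vertices of finite degree. Let $c:D\to\{0,1\}$ be a coloring of the induced subgraph $G[D]$ which is strongly maximal (in all of $D$, as a coloring of $G[D]$). Then every extension $\tilde c:V(G)\to\{0,1\}$ of $c$ is almost strongly maximal in $D$ (as a coloring of $G$).
   Context: Graphs are simple, undirected, possibly infinite; degree of $v$ is $|N(v)|$; $G[D]$ is the induced subgraph. A coloring of a graph $\Gamma$ is a map $V(\Gamma)\to\{0,1\}$. $\mathit{trans}(c)=\{uv\in E(\Gamma):c(u)\neq c(v)\}$; $c*F$ differs from $c$ exactly on $F$; for finite $F$ consisting of vertices of finite degree, $\mathit{dtrans}(c,F)=|\mathit{trans}(c)\setminus\mathit{trans}(c*F)|-|\mathit{trans}(c*F)\setminus\mathit{trans}(c)|$. $c$ is strongly maximal in $A$ if $\mathit{dtrans}(c,F)\ge0$ for every finite $F\subseteq A$ consisting of vertices of finite degree. Colorings $c,c'$ are close in $A$ if $c\triangle c'=\{v:c(v)\neq c'(v)\}$ is finite, consists of vertices of finite degree, and is contained in $A$. $c$ is almost strongly maximal in $A$ if it is close in $A$ to a coloring strongly maximal in $A$. *)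

theory Defs
  imports Main
begin

text \<open>A (possibly infinite) simple undirected graph is given by a vertex set V and a
symmetric, irreflexive adjacency relation E; only edges with both ends in V count.
An induced subgraph G[D] is represented by the pair (D, E).
A coloring is a map to bool (= {0,1}); only its values on V matter.\<close>

definition simple_graph :: "'a set \<Rightarrow> ('a \<Rightarrow> 'a \<Rightarrow> bool) \<Rightarrow> bool" where
  "simple_graph V E \<longleftrightarrow> (\<forall>u\<in>V. \<forall>v\<in>V. E u v \<longrightarrow> E v u) \<and> (\<forall>v\<in>V. \<not> E v v)"

definition nbhd :: "'a set \<Rightarrow> ('a \<Rightarrow> 'a \<Rightarrow> bool) \<Rightarrow> 'a \<Rightarrow> 'a set" where
  "nbhd V E v = {u\<in>V. E v u}"

definition finite_deg :: "'a set \<Rightarrow> ('a \<Rightarrow> 'a \<Rightarrow> bool) \<Rightarrow> 'a \<Rightarrow> bool" where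
  "finite_deg V E v \<longleftrightarrow> finite (nbhd V E v)"

definition trans_edges :: "'a set \<Rightarrow> ('a \<Rightarrow> 'a \<Rightarrow> bool) \<Rightarrow> ('a \<Rightarrow> bool) \<Rightarrow> 'a set set" where
  "trans_edges V E c = {{u, v} | u v. u \<in> V \<and> v \<in> V \<and> E u v \<and> c u \<noteq> c v}"

definition flip :: "('a \<Rightarrow> bool) \<Rightarrow> 'a set \<Rightarrow> 'a \<Rightarrow> bool" where
  "flip c F = (\<lambda>v. if v \<in> F then \<not> c v else c v)"

definition dtrans :: "'a set \<Rightarrow> ('a \<Rightarrow> 'a \<Rightarrow> bool) \<Rightarrow> ('a \<Rightarrow> bool) \<Rightarrow> 'a set \<Rightarrow> int" where
  "dtrans V E c F =
     int (card (trans_edges V E c - trans_edges V E (flip c F)))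
   - int (card (trans_edges V E (flip c F) - trans_edges V E c))"

definition strongly_maximal ::
  "'a set \<Rightarrow> ('a \<Rightarrow> 'a \<Rightarrow> bool) \<Rightarrow> ('a \<Rightarrow> bool) \<Rightarrow> 'a set \<Rightarrow> bool" where
  "strongly_maximal V E c A \<longleftrightarrow>
     (\<forall>F. finite F \<and> F \<subseteq> A \<and> (\<forall>v\<in>F. finite_deg V E v) \<longrightarrow> dtrans V E c F \<ge> 0)"

definition close_in ::
  "'a set \<Rightarrow> ('a \<Rightarrow> 'a \<Rightarrow> bool) \<Rightarrow> ('a \<Rightarrow> bool) \<Rightarrow> ('a \<Rightarrow> bool) \<Rightarrow> 'a set \<Rightarrow> bool" where
  "close_in V E c c' A \<longleftrightarrow>
     (let S = {v\<in>V. c v \<noteq> c' v} in finite S \<and> (\<forall>v\<in>S. finite_deg V E v) \<and> S \<subseteq> A)"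

definition almost_strongly_maximal ::
  "'a set \<Rightarrow> ('a \<Rightarrow> 'a \<Rightarrow> bool) \<Rightarrow> ('a \<Rightarrow> bool) \<Rightarrow> 'a set \<Rightarrow> bool" where
  "almost_strongly_maximal V E c A \<longleftrightarrow>
     (\<exists>c'. close_in V E c c' A \<and> strongly_maximal V E c' A)"

end

theory Submission
  imports Defs
begin

lemma d_local:
  assumes "finite U" "A - B \<subseteq> U" "B - A \<subseteq> U"
  shows "int (card (A - B)) - int (card (B - A)) = int (card (A \<inter> U)) - int (card (B \<inter> U))"
proof -
  have e1: "A \<inter> U = (A - B) \<union> (A \<inter> B \<inter> U)" using assms by blast
  have e2: "B \<inter> U = (B - A) \<union> (A \<inter> B \<inter> U)" using assms by blast
  have f: "finite (A - B)" "finite (B - A)" "finite (A \<inter> B \<inter> U)"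
    using assms finite_subset by auto
  have "card (A \<inter> U) = card (A - B) + card (A \<inter> B \<inter> U)"
    unfolding e1 by (rule card_Un_disjoint) (use f in auto)
  moreover have "card (B \<inter> U) = card (B - A) + card (A \<inter> B \<inter> U)"
    unfolding e2 by (rule card_Un_disjoint) (use f in auto)
  ultimately show ?thesis by simp
qed

lemma d_cocycle:
  assumes "finite (X - Y)" "finite (Y - X)" "finite (Y - Z)" "finite (Z - Y)"
  shows "int (card (X - Z)) - int (card (Z - X)) =
         (int (card (X - Y)) - int (card (Y - X))) + (int (card (Y - Z)) - int (card (Z - Y)))"
proof -
  define U where "U = (X - Y) \<union> (Y - X) \<union> (Y - Z) \<union> (Z - Y)"
  have fU: "finite U" using assms U_def by auto
  have a: "X - Z \<subseteq> U" "Z - X \<subseteq> U" "X - Y \<subseteq> U" "Y - X \<subseteq> U" "Y - Z \<subseteq> U" "Z - Y \<subseteq> U"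
    unfolding U_def by blast+
  show ?thesis
    using d_local[OF fU a(1,2)] d_local[OF fU a(3,4)] d_local[OF fU a(5,6)]
    by linarith
qed

lemma trans_diff_sub:
  assumes sg: "simple_graph V E" and eq: "\<forall>x. x \<notin> F \<longrightarrow> c1 x = c2 x"
  shows "trans_edges V E c1 - trans_edges V E c2 \<subseteq> (\<Union>u\<in>F. (\<lambda>v. {u,v}) ` nbhd V E u)"
proof
  fix e assume e: "e \<in> trans_edges V E c1 - trans_edges V E c2"
  then obtain u v where uv: "e = {u,v}" "u \<in> V" "v \<in> V" "E u v" "c1 u \<noteq> c1 v"
    unfolding trans_edges_def by blast
  have "u \<in> F \<or> v \<in> F"
  proof (rule ccontr)
    assume "\<not> (u \<in> F \<or> v \<in> F)"
    then have "c2 u \<noteq> c2 v" using eq uv by auto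
    then have "e \<in> trans_edges V E c2" unfolding trans_edges_def using uv by blast
    with e show False by blast
  qed
  then show "e \<in> (\<Union>u\<in>F. (\<lambda>v. {u,v}) ` nbhd V E u)"
  proof
    assume "u \<in> F" then show ?thesis using uv unfolding nbhd_def by blast
  next
    assume "v \<in> F"
    moreover have "E v u" using sg uv unfolding simple_graph_def by blast
    moreover have "e = {v,u}" using uv by blast
    ultimately show ?thesis using uv unfolding nbhd_def by blast
  qed
qed

lemma trans_diff_fin:
  assumes sg: "simple_graph V E" and fF: "finite F" and fd: "\<forall>v\<in>F. finite_deg V E v"
    and eq: "\<forall>x. x \<notin> F \<longrightarrow> c1 x = c2 x"
  shows "finite (trans_edges V E c1 - trans_edges V E c2)"
proof (rule finite_subset[OF trans_diff_sub[OF sg eq]])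
  show "finite (\<Union>u\<in>F. (\<lambda>v. {u,v}) ` nbhd V E u)"
    using fF fd unfolding finite_deg_def by auto
qed

lemma flip_fins:
  assumes sg: "simple_graph V E" and fF: "finite F" and fd: "\<forall>v\<in>F. finite_deg V E v"
  shows "finite (trans_edges V E c - trans_edges V E (flip c F))"
        "finite (trans_edges V E (flip c F) - trans_edges V E c)"
  by (rule trans_diff_fin[OF sg fF fd]; simp add: flip_def)+

lemma trans_edgesI:
  "u \<in> V \<Longrightarrow> v \<in> V \<Longrightarrow> E u v \<Longrightarrow> c u \<noteq> c v \<Longrightarrow> {u,v} \<in> trans_edges V E c"
  unfolding trans_edges_def by blast

lemma bound_lemma:
  assumes sg: "simple_graph V E" and DV: "D \<subseteq> V"
    and ctc: "\<forall>v\<in>D. ct v = c v"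
    and SD: "S \<subseteq> D" and fS: "finite S" and fd: "\<forall>v\<in>S. finite_deg V E v"
    and R_def: "R = (\<Union>w\<in>V - D. (\<lambda>v. {w,v}) ` nbhd V E w)" and fR: "finite R"
  shows "dtrans V E ct S \<ge> dtrans D E c S - int (card R)"
proof -
  define X where "X = trans_edges V E ct"
  define X' where "X' = trans_edges V E (flip ct S)"
  define Y where "Y = trans_edges D E c"
  define Y' where "Y' = trans_edges D E (flip c S)"
  have sgD: "simple_graph D E" using sg DV unfolding simple_graph_def by blast
  have fdD: "\<forall>v\<in>S. finite_deg D E v"
    using fd DV unfolding finite_deg_def nbhd_def
    by (auto elim!: rev_finite_subset)
  have fl: "\<And>v. v \<in> D \<Longrightarrow> flip ct S v = flip c S v" using ctc by (simp add: flip_def)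
  have s1: "Y - Y' \<subseteq> X - X'"
  proof
    fix e assume e: "e \<in> Y - Y'"
    then obtain u v where uv: "e = {u,v}" "u \<in> D" "v \<in> D" "E u v" "c u \<noteq> c v"
      unfolding Y_def trans_edges_def by blast
    have "e \<in> X" unfolding X_def uv(1) using uv DV ctc by (intro trans_edgesI) auto
    moreover have "e \<notin> X'"
    proof
      assume "e \<in> X'"
      then obtain u' v' where uv': "e = {u',v'}" "u' \<in> V" "v' \<in> V" "E u' v'" "flip ct S u' \<noteq> flip ct S v'"
        unfolding X'_def trans_edges_def by blast
      have "u' \<in> {u,v}" "v' \<in> {u,v}" using uv(1) uv'(1) by blast+
      then have D': "u' \<in> D" "v' \<in> D" using uv by blast+
      then have "e \<in> Y'" unfolding Y'_def uv'(1) using uv' fl by (intro trans_edgesI) auto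
      with e show False by blast
    qed
    ultimately show "e \<in> X - X'" by blast
  qed
  have YX: "Y \<subseteq> X"
  proof
    fix e assume "e \<in> Y"
    then obtain u v where uv: "e = {u,v}" "u \<in> D" "v \<in> D" "E u v" "c u \<noteq> c v"
      unfolding Y_def trans_edges_def by blast
    show "e \<in> X" unfolding X_def uv(1) using uv DV ctc by (intro trans_edgesI) auto
  qed
  have s2: "X' - X \<subseteq> (Y' - Y) \<union> R"
  proof
    fix e assume e: "e \<in> X' - X"
    then obtain u v where uv: "e = {u,v}" "u \<in> V" "v \<in> V" "E u v" "flip ct S u \<noteq> flip ct S v"
      unfolding X'_def trans_edges_def by blast
    show "e \<in> (Y' - Y) \<union> R"
    proof (cases "u \<in> D \<and> v \<in> D")
      case True
      then have "e \<in> Y'" unfolding Y'_def uv(1) using uv fl by (intro trans_edgesI) auto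
      moreover have "e \<notin> Y" using e YX by blast
      ultimately show ?thesis by blast
    next
      case False
      show ?thesis
      proof (cases "u \<in> D")
        case False
        then show ?thesis unfolding R_def nbhd_def using uv by blast
      next
        case True
        then have "v \<notin> D" using \<open>\<not> (u \<in> D \<and> v \<in> D)\<close> by blast
        moreover have "E v u" using sg uv unfolding simple_graph_def by blast
        moreover have "e = {v,u}" using uv by blast
        ultimately show ?thesis unfolding R_def nbhd_def using uv by blast
      qed
    qed
  qed
  have fXX': "finite (X - X')" unfolding X_def X'_def using flip_fins[OF sg fS fd] by blast
  have fYY': "finite (Y' - Y)" unfolding Y_def Y'_def using flip_fins[OF sgD fS fdD] by blast
  have c1: "card (Y - Y') \<le> card (X - X')" by (rule card_mono[OF fXX' s1])
  have "card (X' - X) \<le> card ((Y' - Y) \<union> R)" by (rule card_mono) (use fYY' fR s2 in auto)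
  also have "\<dots> \<le> card (Y' - Y) + card R" by (rule card_Un_le)
  finally have c2: "card (X' - X) \<le> card (Y' - Y) + card R" .
  show ?thesis unfolding dtrans_def
    using c1 c2 unfolding X_def X'_def Y_def Y'_def by linarith
qed


theorem corollary2p5:
  fixes V D :: "'a set" and E :: "'a \<Rightarrow> 'a \<Rightarrow> bool" and c ct :: "'a \<Rightarrow> bool"
  assumes "simple_graph V E"
    and "D \<subseteq> V"
    and "finite (V - D)"
    and "\<forall>v\<in>V - D. finite_deg V E v"
    and "strongly_maximal D E c D"
    and "\<forall>v\<in>D. ct v = c v"
  shows "almost_strongly_maximal V E ct D"
proof -
  note sg = assms(1) and DV = assms(2)
  define R where "R = (\<Union>w\<in>V - D. (\<lambda>v. {w,v}) ` nbhd V E w)"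
  have fR: "finite R" unfolding R_def using assms(3,4) unfolding finite_deg_def by auto
  define r where "r = int (card R)"
  define adm where "adm S \<longleftrightarrow> finite S \<and> S \<subseteq> D \<and> (\<forall>v\<in>S. finite_deg V E v)" for S
  have lb: "dtrans V E ct S \<ge> - r" if "adm S" for S
  proof -
    have fdD: "\<forall>v\<in>S. finite_deg D E v"
    proof
      fix v assume "v \<in> S"
      then have "finite {u\<in>V. E v u}" using that unfolding adm_def finite_deg_def nbhd_def by blast
      moreover have "{u\<in>D. E v u} \<subseteq> {u\<in>V. E v u}" using DV by blast
      ultimately show "finite_deg D E v" unfolding finite_deg_def nbhd_def using finite_subset by blast
    qed
    have "dtrans D E c S \<ge> 0" using assms(5) that fdD unfolding strongly_maximal_def adm_def by blast
    moreover have "dtrans V E ct S \<ge> dtrans D E c S - int (card R)"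
      using that by (intro bound_lemma[OF sg DV assms(6) _ _ _ R_def fR]) (auto simp: adm_def)
    ultimately show ?thesis unfolding r_def by linarith
  qed
  have "adm {}" unfolding adm_def by simp
  from ex_has_least_nat[where P=adm and m="\<lambda>S. nat (dtrans V E ct S + r)", OF this]
  obtain S0 where S0: "adm S0" and mn: "\<And>S. adm S \<Longrightarrow> nat (dtrans V E ct S0 + r) \<le> nat (dtrans V E ct S + r)"
    by blast
  have mn': "dtrans V E ct S0 \<le> dtrans V E ct S" if "adm S" for S
    using mn[OF that] lb[OF that] lb[OF S0] by linarith
  define c' where "c' = flip ct S0"
  have close: "close_in V E ct c' D"
  proof -
    have "{v\<in>V. ct v \<noteq> c' v} = S0" using S0 DV unfolding adm_def c'_def flip_def by auto
    then show ?thesis using S0 unfolding close_in_def adm_def Let_def by simp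
  qed
  have sm: "strongly_maximal V E c' D"
    unfolding strongly_maximal_def
  proof (intro allI impI)
    fix F assume F: "finite F \<and> F \<subseteq> D \<and> (\<forall>v\<in>F. finite_deg V E v)"
    define T where "T = (S0 - F) \<union> (F - S0)"
    have aT: "adm T" using S0 F unfolding adm_def T_def by auto
    have fl: "flip c' F = flip ct T" unfolding c'_def T_def flip_def by auto
    have fS0: "finite S0" "\<forall>v\<in>S0. finite_deg V E v" using S0 unfolding adm_def by auto
    have "dtrans V E ct T = dtrans V E ct S0 + dtrans V E c' F"
      unfolding dtrans_def fl[symmetric] c'_def
      by (rule d_cocycle) (use flip_fins[OF sg fS0] flip_fins[OF sg, of F] F in auto)
    then show "dtrans V E c' F \<ge> 0" using mn'[OF aT] by linarith
  qed
  show ?thesis unfolding almost_strongly_maximal_def using close sm by blast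
qed

end
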